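(* Let $f,w\colon\mathbb{R}^d\to[0,\infty)$ be two proper log-concave functions such that $w$ is the John function of $f$ with respect to $w$. Assume in addition that for every $\xi\in(0,\|f\|_\infty)$ there is a positive position $g$ of $w$ with $g\le f$ and $\|g\|_\infty=\xi$. Then \[ \|w\|_\infty\le\|f\|_\infty\le e^d\,\|w\|_\infty. \]
   Context: A function $\mathbb{R}^d\to[0,\infty)$ is proper log-concave if it is upper semi-continuous, log-concave, with finite positive integral. Positions of $w$ are functions $x\mapsto\alpha\,w(Ax+a)$ with $A$ a non-singular real $d\times d$ matrix, $\alpha>0$, $a\in\mathbb{R}^d$; positive positions are those with $A$ positive definite. "$w$ is the John function of $f$ with respect to $w$" means $w\le f$ pointwise and $\int g\le\int w$ for every position $g$ of $w$ with $g\le f$. $\|\cdot\|_\infty$ is the supremum norm. *)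

theory Defs
  imports "HOL-Analysis.Analysis"
begin

definition usc_fun :: "(real^'d \<Rightarrow> real) \<Rightarrow> bool" where
  "usc_fun f \<longleftrightarrow> (\<forall>t::real. closed {x. t \<le> f x})"

definition log_concave_fun :: "(real^'d \<Rightarrow> real) \<Rightarrow> bool" where
  "log_concave_fun f \<longleftrightarrow> (\<forall>x y. \<forall>t\<in>{0<..<1::real}.
      f x powr t * f y powr (1 - t) \<le> f (t *\<^sub>R x + (1 - t) *\<^sub>R y))"

definition proper_log_concave :: "(real^'d \<Rightarrow> real) \<Rightarrow> bool" where
  "proper_log_concave f \<longleftrightarrow> (\<forall>x. 0 \<le> f x) \<and> usc_fun f \<and> log_concave_fun f
      \<and> integrable lborel f \<and> integral\<^sup>L lborel f > 0"

definition position_of :: "(real^'d \<Rightarrow> real) \<Rightarrow> (real^'d \<Rightarrow> real) \<Rightarrow> bool" where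
  "position_of g w \<longleftrightarrow> (\<exists>(A::real^'d^'d) (\<alpha>::real) (a::real^'d).
      invertible A \<and> \<alpha> > 0 \<and> g = (\<lambda>x. \<alpha> * w (A *v x + a)))"

definition pos_def_matrix :: "real^'d^'d \<Rightarrow> bool" where
  "pos_def_matrix A \<longleftrightarrow> transpose A = A \<and> (\<forall>x. x \<noteq> 0 \<longrightarrow> x \<bullet> (A *v x) > 0)"

definition positive_position_of :: "(real^'d \<Rightarrow> real) \<Rightarrow> (real^'d \<Rightarrow> real) \<Rightarrow> bool" where
  "positive_position_of g w \<longleftrightarrow> (\<exists>(A::real^'d^'d) (\<alpha>::real) (a::real^'d).
      pos_def_matrix A \<and> \<alpha> > 0 \<and> g = (\<lambda>x. \<alpha> * w (A *v x + a)))"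

definition john_function :: "(real^'d \<Rightarrow> real) \<Rightarrow> (real^'d \<Rightarrow> real) \<Rightarrow> bool" where
  "john_function w f \<longleftrightarrow> (\<forall>x. w x \<le> f x) \<and>
      (\<forall>g. position_of g w \<and> (\<forall>x. g x \<le> f x) \<longrightarrow> integral\<^sup>L lborel g \<le> integral\<^sup>L lborel w)"

definition sup_norm :: "(real^'d \<Rightarrow> real) \<Rightarrow> real" where
  "sup_norm f = Sup (range (\<lambda>x. \<bar>f x\<bar>))"

end

theory Submission
  imports Defs
begin

lemma affine_int:
  fixes f :: "'a::euclidean_space \<Rightarrow> real"
  assumes f: "integrable lborel f" and c: "c \<noteq> 0"
  shows "integrable lborel (\<lambda>x. f (t + c *\<^sub>R x))"
    and "integral\<^sup>L lborel f = \<bar>c\<bar>^DIM('a) * integral\<^sup>L lborel (\<lambda>x. f (t + c *\<^sub>R x))"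
proof -
  have [measurable]: "f \<in> borel_measurable borel" using borel_measurable_integrable[OF f] by simp
  have e: "(\<integral>\<^sup>+x. ennreal \<bar>f x\<bar> \<partial>lborel) = ennreal (\<bar>c\<bar>^DIM('a)) * (\<integral>\<^sup>+x. ennreal \<bar>f (t + c *\<^sub>R x)\<bar> \<partial>lborel)"
    by (subst lborel_affine[OF c, of t]) (simp add: nn_integral_density nn_integral_distr nn_integral_cmult)
  show i: "integrable lborel (\<lambda>x. f (t + c *\<^sub>R x))"
    unfolding integrable_iff_bounded
  proof
    show "(\<lambda>x. f (t + c *\<^sub>R x)) \<in> borel_measurable lborel" by measurable
    have "(\<integral>\<^sup>+x. ennreal \<bar>f x\<bar> \<partial>lborel) < \<infinity>" using f unfolding integrable_iff_bounded by simp
    then show "(\<integral>\<^sup>+x. ennreal (norm (f (t + c *\<^sub>R x))) \<partial>lborel) < \<infinity>"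
      using c unfolding e by (auto simp add: ennreal_mult_less_top ennreal_mult_eq_top_iff)
  qed
  show "integral\<^sup>L lborel f = \<bar>c\<bar>^DIM('a) * integral\<^sup>L lborel (\<lambda>x. f (t + c *\<^sub>R x))"
    using f i
    by (subst lborel_affine[OF c, of t]) (simp add: integral_density integral_distr)
qed

lemma min_le_sqrt:
  assumes a: "(0::real) \<le> a" shows "min a 1 \<le> a powr (1/2)"
proof (cases "a \<le> 1")
  case True
  have "sqrt a \<le> 1" using True by simp
  then have "sqrt a * sqrt a \<le> sqrt a * 1" using a by (intro mult_left_mono) auto
  then have "a \<le> sqrt a" using a by simp
  then show ?thesis using a True by (simp add: powr_half_sqrt)
next
  case False
  then show ?thesis using a by (simp add: powr_half_sqrt)
qed

lemma plc_bounded: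
  assumes "proper_log_concave w"
  shows "bdd_above (range w)"
proof -
  have nn: "\<And>x. 0 \<le> w x" and lc: "log_concave_fun w" and wi: "integrable lborel w"
    and wp: "integral\<^sup>L lborel w > 0"
    using assms unfolding proper_log_concave_def by auto
  have [measurable]: "w \<in> borel_measurable borel" using borel_measurable_integrable[OF wi] by simp
  have mi: "integrable lborel (\<lambda>x. min (w x) 1)"
    by (rule Bochner_Integration.integrable_bound[OF wi]) (auto simp: nn)
  define J where "J = integral\<^sup>L lborel (\<lambda>x. min (w x) 1)"
  have "J \<noteq> 0"
  proof
    assume "J = 0"
    then have "AE x in lborel. min (w x) 1 = 0"
      unfolding J_def using mi integral_nonneg_eq_0_iff_AE[OF mi] nn by simp
    then have "AE x in lborel. w x = 0"
      by (auto elim!: AE_mp simp: min_def split: if_splits)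
    then have "integral\<^sup>L lborel w = 0" by (simp add: integral_eq_zero_AE)
    with wp show False by simp
  qed
  moreover have "J \<ge> 0" unfolding J_def by (rule Bochner_Integration.integral_nonneg) (simp add: nn)
  ultimately have Jp: "J > 0" by simp
  show ?thesis
  proof (rule bdd_aboveI2)
    fix z
    have pt: "min (w x) 1 * sqrt (w z) \<le> w ((1/2) *\<^sub>R z + (1/2) *\<^sub>R x)" for x
    proof -
      have "w x powr (1/2) * w z powr (1 - 1/2) \<le> w ((1/2) *\<^sub>R x + (1 - 1/2) *\<^sub>R z)"
        using lc[unfolded log_concave_fun_def, rule_format, of "1/2" x z] by simp
      moreover have "min (w x) 1 * sqrt (w z) \<le> w x powr (1/2) * w z powr (1 - 1/2)"
        using min_le_sqrt[OF nn[of x]] nn[of z]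
        by (simp add: powr_half_sqrt mult_right_mono)
      ultimately show ?thesis by (simp add: add.commute)
    qed
    have i2: "integrable lborel (\<lambda>x. w ((1/2) *\<^sub>R z + (1/2) *\<^sub>R x))"
      using affine_int(1)[OF wi, of "1/2" "(1/2) *\<^sub>R z"] by simp
    have e2: "integral\<^sup>L lborel w = (1/2)^DIM(real^'a) * integral\<^sup>L lborel (\<lambda>x. w ((1/2) *\<^sub>R z + (1/2) *\<^sub>R x))"
      using affine_int(2)[OF wi, of "1/2" "(1/2) *\<^sub>R z"] by simp
    have "J * sqrt (w z) = integral\<^sup>L lborel (\<lambda>x. min (w x) 1 * sqrt (w z))"
      unfolding J_def by simp
    also have "\<dots> \<le> integral\<^sup>L lborel (\<lambda>x. w ((1/2) *\<^sub>R z + (1/2) *\<^sub>R x))"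
      by (rule integral_mono[OF _ i2 pt]) (simp add: mi)
    also have "\<dots> = 2^DIM(real^'a) * integral\<^sup>L lborel w"
      unfolding e2 by (simp add: power_one_over)
    finally have "sqrt (w z) \<le> 2^DIM(real^'a) * integral\<^sup>L lborel w / J"
      using Jp by (simp add: field_simps)
    then have "sqrt (w z) ^ 2 \<le> (2^DIM(real^'a) * integral\<^sup>L lborel w / J) ^ 2"
      by (rule power_mono) (simp add: nn)
    then show "w z \<le> (2^DIM(real^'a) * integral\<^sup>L lborel w / J) ^ 2"
      using nn[of z] by simp
  qed
qed

lemma mat_mulv: "((c::real) *\<^sub>R mat 1 :: real^'n^'n) *v x = c *\<^sub>R x"
  by (metis matrix_vector_mul_lid scaleR_matrix_vector_assoc)
lemma inv_mat: "(c::real) \<noteq> 0 \<Longrightarrow> invertible (c *\<^sub>R mat 1 :: real^'n^'n)"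
  apply (rule scalar_invertible, assumption)
  unfolding invertible_def by (metis matrix_mul_lid)

lemma ln_bound:
  fixes r d :: real
  assumes d: "d > 0" and H: "\<And>s. 0 < s \<Longrightarrow> s < 1 \<Longrightarrow> (1 - s) * r + d * ln s \<le> 0"
  shows "r \<le> d"
proof (rule ccontr)
  assume "\<not> r \<le> d"
  then have rd: "r > d" by simp
  define s where "s = (r + d) / (2 * r)"
  have rp: "r > 0" using rd d by simp
  have s0: "0 < s" and s1: "s < 1" using rd d rp by (auto simp: s_def field_simps)
  have "ln (1/s) \<le> 1/s - 1" using s0 by (intro ln_le_minus_one) simp
  then have "- ln s \<le> (1 - s) / s" using s0 by (simp add: ln_div field_simps)
  then have "d * (- ln s) \<le> d * ((1 - s) / s)" using d by (intro mult_left_mono) auto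
  moreover have "(1 - s) * r \<le> d * (- ln s)" using H[OF s0 s1] by simp
  moreover have "d * ((1 - s) / s) = (1 - s) * (d / s)" by (simp add: field_simps)
  ultimately have "(1 - s) * r \<le> (1 - s) * (d / s)" by linarith
  then have "r \<le> d / s" using s1 mult_left_le_imp_le by (metis diff_gt_0_iff_gt)
  then have "s * r \<le> d" using s0 by (simp add: field_simps)
  moreover have "s * r = (r + d) / 2" using rp by (simp add: s_def field_simps)
  ultimately show False using rd by simp
qed

theorem lemmaA4:
  fixes f w :: "real^'d \<Rightarrow> real"
  assumes "proper_log_concave f" and "proper_log_concave w"
    and "john_function w f"
    and "\<forall>\<xi>\<in>{0<..<sup_norm f}. \<exists>g. positive_position_of g w \<and> (\<forall>x. g x \<le> f x) \<and> sup_norm g = \<xi>"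
  shows "sup_norm w \<le> sup_norm f \<and> sup_norm f \<le> exp (real CARD('d)) * sup_norm w"
proof -
  have fnn: "\<And>x. 0 \<le> f x" and flc: "log_concave_fun f"
    using assms(1) unfolding proper_log_concave_def by auto
  have wnn: "\<And>x. 0 \<le> w x" and wi: "integrable lborel w"
    and wp: "integral\<^sup>L lborel w > 0"
    using assms(2) unfolding proper_log_concave_def by auto
  have wf: "\<And>x. w x \<le> f x"
    and john: "\<And>g. position_of g w \<Longrightarrow> (\<forall>x. g x \<le> f x) \<Longrightarrow> integral\<^sup>L lborel g \<le> integral\<^sup>L lborel w"
    using assms(3) unfolding john_function_def by auto
  have wb: "bdd_above (range w)" by (rule plc_bounded[OF assms(2)])
  define W where "W = Sup (range w)"
  have swW: "sup_norm w = W" unfolding sup_norm_def W_def using wnn by simp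
  have wW: "\<And>x. w x \<le> W" unfolding W_def using wb by (simp add: cSUP_upper)
  have Wp: "W > 0"
  proof (rule ccontr)
    assume "\<not> W > 0"
    then have "\<And>x. w x = 0" using wW wnn by (meson antisym not_less order.trans)
    then have "w = (\<lambda>_. 0)" by (intro ext) simp
    then have "integral\<^sup>L lborel w = 0" by simp
    with wp show False by simp
  qed
  define d where "d = real CARD('d)"
  have dp: "d > 0" unfolding d_def by simp
  have key: "f x0 \<le> exp d * W" for x0
  proof (cases "f x0 \<le> W")
    case True
    moreover have "W \<le> exp d * W" using Wp dp by simp
    ultimately show ?thesis by linarith
  next
    case False
    then have fW: "f x0 > W" by simp
    define r where "r = ln (f x0 / W)"
    have H: "(1 - s) * r + d * ln s \<le> 0" if s0: "0 < s" and s1: "s < 1" for s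
    proof -
      define c where "c = (f x0 / W) powr (1 - s)"
      have cp: "c > 0" unfolding c_def using fW Wp by simp
      define t where "t = x0 - (1/s) *\<^sub>R x0"
      define G where "G = (\<lambda>x. c * w ((1/s) *\<^sub>R mat 1 *v x + t))"
      have Gx: "G x = c * w (t + (1/s) *\<^sub>R x)" for x
        unfolding G_def mat_mulv by (simp add: add.commute)
      have posG: "position_of G w"
        unfolding position_of_def G_def
        by (intro exI[of _ "(1/s) *\<^sub>R mat 1"] exI[of _ c] exI[of _ t]) (use inv_mat[of "1/s"] s0 cp in auto)
      have GF: "\<forall>x. G x \<le> f x"
      proof
        fix x
        define z where "z = t + (1/s) *\<^sub>R x"
        have xz: "s *\<^sub>R z + (1 - s) *\<^sub>R x0 = x"
          using s0 by (simp add: z_def t_def algebra_simps)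
        have lcz: "f z powr s * f x0 powr (1 - s) \<le> f x"
          using flc[unfolded log_concave_fun_def, rule_format, of s z x0] s0 s1 xz by simp
        have "c * w z \<le> w z powr s * f x0 powr (1 - s)"
        proof (cases "w z = 0")
          case True then show ?thesis by simp
        next
          case False
          then have wz: "w z > 0" using wnn[of z] by simp
          have "W powr (s - 1) \<le> w z powr (s - 1)"
            using wz wW[of z] s1 by (intro powr_mono2') auto
          then have "w z * W powr (s - 1) \<le> w z * w z powr (s - 1)"
            using wz by simp
          also have "w z * w z powr (s - 1) = w z powr s"
            proof -
            have "w z powr s = w z powr (1 + (s - 1))" by simp
            also have "\<dots> = w z powr 1 * w z powr (s - 1)" by (rule powr_add)
            finally show ?thesis using wz by simp
          qed
          finally have A: "w z * W powr (s - 1) \<le> w z powr s" .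
          have "c = W powr (s - 1) * f x0 powr (1 - s)"
          proof -
            have "c = f x0 powr (1 - s) / W powr (1 - s)"
              unfolding c_def using Wp fW by (simp add: powr_divide)
            moreover have "W powr (s - 1) = 1 / W powr (1 - s)"
              using powr_minus_divide[of W "1 - s"] by simp
            ultimately show ?thesis by simp
          qed
          then have "c * w z = (w z * W powr (s - 1)) * f x0 powr (1 - s)" by simp
          also have "\<dots> \<le> w z powr s * f x0 powr (1 - s)"
            using A by (intro mult_right_mono) auto
          finally show ?thesis .
        qed
        also have "\<dots> \<le> f z powr s * f x0 powr (1 - s)"
          using wf[of z] wnn[of z] s0 by (intro mult_right_mono powr_mono2) auto
        also have "\<dots> \<le> f x" by (rule lcz)
        finally show "G x \<le> f x" unfolding Gx z_def .
      qed
      have jG: "integral\<^sup>L lborel G \<le> integral\<^sup>L lborel w" by (rule john[OF posG GF])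
      define I where "I = integral\<^sup>L lborel (\<lambda>x. w (t + (1/s) *\<^sub>R x))"
      have eW: "integral\<^sup>L lborel w = (1/s)^CARD('d) * I"
        using affine_int(2)[OF wi, of "1/s" t] s0 unfolding I_def by simp
      have eI: "I = s^CARD('d) * integral\<^sup>L lborel w"
        unfolding eW using s0 by (simp add: power_one_over)
      have eG: "integral\<^sup>L lborel G = c * I"
        unfolding Gx I_def by simp
      have "c * (s ^ CARD('d) * integral\<^sup>L lborel w) \<le> integral\<^sup>L lborel w"
        using jG unfolding eG eI .
      then have "c * s ^ CARD('d) \<le> 1" using wp by (simp add: mult.assoc[symmetric])
      then have "ln (c * s ^ CARD('d)) \<le> 0" using cp s0 by simp
      moreover have "ln (c * s ^ CARD('d)) = (1 - s) * r + d * ln s"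
        using cp s0 fW Wp unfolding c_def r_def d_def by (simp add: ln_mult ln_powr ln_realpow)
      ultimately show ?thesis by simp
    qed
    have "r \<le> d" by (rule ln_bound[OF dp H])
    then have "f x0 / W \<le> exp d" unfolding r_def using fW Wp
      by (metis divide_pos_pos exp_ln exp_le_cancel_iff less_trans)
    then show ?thesis using Wp by (simp add: field_simps)
  qed
  have fb: "bdd_above (range f)" using key by (intro bdd_aboveI2) 
  have sf: "sup_norm f = Sup (range f)" unfolding sup_norm_def using fnn by simp
  have 1: "sup_norm w \<le> sup_norm f"
    unfolding swW sf W_def using fb wf by (intro cSUP_mono) auto
  have 2: "sup_norm f \<le> exp d * W"
    unfolding sf using key by (intro cSUP_least) auto
  show ?thesis using 1 2 swW d_def by simp
qed

end
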